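(* Let $(X,\Delta,\xi_0)$ be a log Fano cone singularity with good $\mathbb T$-action. For any $\mathbb T$-invariant linearly bounded filtration $\mathcal F$ of $R$ and any $a\in\mathbb R_{>0}$, we have $\lambda_{\max}(\xi_0;\mathcal F_{a\xi_0})=\lambda_{\max}(\xi_0;\mathcal F)+a$.
   Context: Work over an algebraically closed field of characteristic $0$. $(X,\Delta,\xi_0)$: klt singularity $x\in(X=\mathrm{Spec}(R),\Delta)$ with a good torus $\mathbb T$-action preserving $\Delta$, weight decomposition $R=\bigoplus_{\alpha\in M}R_\alpha$, $\xi_0\in N_{\mathbb R}=(M^\vee)_{\mathbb R}$ with $\langle\alpha,\xi_0\rangle>0$ for all $\alpha\ne0$ with $R_\alpha\ne0$; $\mathrm{wt}_{\xi_0}(\sum f_\alpha)=\min\{\langle\alpha,\xi_0\rangle:f_\alpha\ne0\}$. Filtrations: decreasing, left-continuous, multiplicative families of ideals $\{\mathcal F^\lambda\}_{\lambda\ge0}$, $\mathcal F^0=R$, $\mathfrak m_x$-primary for $\lambda>0$; linearly bounded if $\mathcal F^{C\lambda}\subseteq\mathfrak m_x^{\lceil\lambda\rceil}$ for some $C$; $\mathbb T$-invariant if $\mathcal F^\lambda=\bigoplus_\alpha(\mathcal F^\lambda\cap R_\alpha)$. Twist: $\mathcal F_\xi^\lambda=\bigoplus_\alpha(\mathcal F^{\lambda-\langle\alpha,\xi\rangle}\cap R_\alpha)$ with $\mathcal F^\mu=R$ for $\mu\le0$. $\lambda_{\max}(\xi_0;\mathcal F)=\sup\{\lambda>0:\mathcal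 F^{\lambda m}\not\subseteq\mathcal F_{\mathrm{wt}_{\xi_0}}^m\text{ for some }m\in\mathbb N\}$, where $\mathcal F_v^\lambda=\{f:v(f)\ge\lambda\}$. *)

theory Defs
  imports Main "HOL-Library.Extended_Real" "HOL-Library.Function_Algebras"
begin

text \<open>The coordinate ring R is a type 'a (an integral domain).  The character lattice
M of the torus T is modelled as 'n \<Rightarrow> int for a finite index type 'n (M = Z^r),
and N_R = Hom(M,R) as 'n \<Rightarrow> real.  The weight decomposition R = \<Oplus> R_alpha is
given by the projection maps pr alpha :: 'a \<Rightarrow> 'a onto the summands.\<close>

definition pair :: "('n::finite \<Rightarrow> int) \<Rightarrow> ('n \<Rightarrow> real) \<Rightarrow> real" where
  "pair \<alpha> \<xi> = (\<Sum>i\<in>UNIV. real_of_int (\<alpha> i) * \<xi> i)"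

definition is_grading :: "(('n::finite \<Rightarrow> int) \<Rightarrow> 'a::comm_ring_1 \<Rightarrow> 'a) \<Rightarrow> bool" where
  "is_grading pr \<longleftrightarrow>
     (\<forall>f. finite {\<alpha>. pr \<alpha> f \<noteq> 0}) \<and>
     (\<forall>f. f = (\<Sum>\<alpha>\<in>{\<alpha>. pr \<alpha> f \<noteq> 0}. pr \<alpha> f)) \<and>
     (\<forall>\<alpha> f g. pr \<alpha> (f + g) = pr \<alpha> f + pr \<alpha> g) \<and>
     (\<forall>\<alpha> \<beta> f. pr \<alpha> (pr \<beta> f) = (if \<alpha> = \<beta> then pr \<beta> f else 0)) \<and>
     (\<forall>\<alpha> \<beta> f g. pr \<alpha> f = f \<and> pr \<beta> g = g \<longrightarrow> pr (\<alpha> + \<beta>) (f * g) = f * g) \<and>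
     pr 0 1 = 1"

inductive_set gen_subring :: "'a::comm_ring_1 set \<Rightarrow> 'a set" for S where
  base: "x \<in> S \<Longrightarrow> x \<in> gen_subring S"
| one: "1 \<in> gen_subring S"
| add: "x \<in> gen_subring S \<Longrightarrow> y \<in> gen_subring S \<Longrightarrow> x + y \<in> gen_subring S"
| neg: "x \<in> gen_subring S \<Longrightarrow> - x \<in> gen_subring S"
| mult: "x \<in> gen_subring S \<Longrightarrow> y \<in> gen_subring S \<Longrightarrow> x * y \<in> gen_subring S"

text \<open>(R, T, xi0) is a cone singularity with good torus action and xi0 in the Reeb cone:
R is a finitely generated algebra over the field R_0 = k by homogeneous elements,
and <alpha, xi0> > 0 for every nonzero weight alpha with R_alpha \<noteq> 0.\<close>
definition good_cone :: "(('n::finite \<Rightarrow> int) \<Rightarrow> 'a::idom \<Rightarrow> 'a) \<Rightarrow> ('n \<Rightarrow> real) \<Rightarrow> bool" where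
  "good_cone pr \<xi>0 \<longleftrightarrow>
     is_grading pr \<and>
     (\<forall>c. pr 0 c = c \<and> c \<noteq> 0 \<longrightarrow> (\<exists>d. c * d = 1)) \<and>
     (\<exists>G. finite G \<and> (\<forall>g\<in>G. \<exists>\<alpha>. pr \<alpha> g = g) \<and>
          gen_subring ({c. pr 0 c = c} \<union> G) = UNIV) \<and>
     (\<forall>\<alpha>. \<alpha> \<noteq> 0 \<and> (\<exists>f. f \<noteq> 0 \<and> pr \<alpha> f = f) \<longrightarrow> pair \<alpha> \<xi>0 > 0)"

definition is_ideal :: "'a::comm_ring_1 set \<Rightarrow> bool" where
  "is_ideal I \<longleftrightarrow> 0 \<in> I \<and> (\<forall>x\<in>I. \<forall>y\<in>I. x + y \<in> I) \<and> (\<forall>r. \<forall>x\<in>I. r * x \<in> I)"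

definition ideal_span :: "'a::comm_ring_1 set \<Rightarrow> 'a set" where
  "ideal_span S = \<Inter>{I. is_ideal I \<and> S \<subseteq> I}"

fun ideal_pow :: "'a::comm_ring_1 set \<Rightarrow> nat \<Rightarrow> 'a set" where
  "ideal_pow I 0 = UNIV"
| "ideal_pow I (Suc k) = ideal_span {x * y | x y. x \<in> I \<and> y \<in> ideal_pow I k}"

definition radical :: "'a::comm_ring_1 set \<Rightarrow> 'a set" where
  "radical I = {f. \<exists>n. f ^ n \<in> I}"

text \<open>The maximal ideal m_x of the vertex x: the sum of all R_alpha with alpha \<noteq> 0.\<close>
definition max_ideal :: "(('n::finite \<Rightarrow> int) \<Rightarrow> 'a::comm_ring_1 \<Rightarrow> 'a) \<Rightarrow> 'a set" where
  "max_ideal pr = {f. pr 0 f = 0}"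

definition m_primary :: "(('n::finite \<Rightarrow> int) \<Rightarrow> 'a::comm_ring_1 \<Rightarrow> 'a) \<Rightarrow> 'a set \<Rightarrow> bool" where
  "m_primary pr I \<longleftrightarrow> is_ideal I \<and> radical I = max_ideal pr"

text \<open>Filtrations: only the values at lambda \<ge> 0 matter.\<close>
definition filtration :: "(('n::finite \<Rightarrow> int) \<Rightarrow> 'a::comm_ring_1 \<Rightarrow> 'a) \<Rightarrow> (real \<Rightarrow> 'a set) \<Rightarrow> bool" where
  "filtration pr F \<longleftrightarrow>
     F 0 = UNIV \<and>
     (\<forall>t\<ge>0. is_ideal (F t)) \<and>
     (\<forall>t s. 0 \<le> t \<and> t \<le> s \<longrightarrow> F s \<subseteq> F t) \<and>
     (\<forall>t>0. F t = (\<Inter>s\<in>{0..<t}. F s)) \<and>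
     (\<forall>t s f g. 0 \<le> t \<and> 0 \<le> s \<and> f \<in> F t \<and> g \<in> F s \<longrightarrow> f * g \<in> F (t + s)) \<and>
     (\<forall>t>0. m_primary pr (F t))"

definition Fext :: "(real \<Rightarrow> 'a set) \<Rightarrow> real \<Rightarrow> 'a set" where
  "Fext F s = (if s \<le> 0 then UNIV else F s)"

definition linearly_bounded :: "(('n::finite \<Rightarrow> int) \<Rightarrow> 'a::comm_ring_1 \<Rightarrow> 'a) \<Rightarrow> (real \<Rightarrow> 'a set) \<Rightarrow> bool" where
  "linearly_bounded pr F \<longleftrightarrow>
     (\<exists>C>0. \<forall>t\<ge>0. F (C * t) \<subseteq> ideal_pow (max_ideal pr) (nat \<lceil>t\<rceil>))"

definition T_invariant :: "(('n::finite \<Rightarrow> int) \<Rightarrow> 'a::comm_ring_1 \<Rightarrow> 'a) \<Rightarrow> (real \<Rightarrow> 'a set) \<Rightarrow> bool" where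
  "T_invariant pr F \<longleftrightarrow> (\<forall>t\<ge>0. F t = {f. \<forall>\<alpha>. pr \<alpha> f \<in> F t})"

definition twist :: "(('n::finite \<Rightarrow> int) \<Rightarrow> 'a::comm_ring_1 \<Rightarrow> 'a) \<Rightarrow> (real \<Rightarrow> 'a set) \<Rightarrow> ('n \<Rightarrow> real) \<Rightarrow> real \<Rightarrow> 'a set" where
  "twist pr F \<xi> t = {f. \<forall>\<alpha>. pr \<alpha> f \<in> Fext F (t - pair \<alpha> \<xi>)}"

text \<open>wt_xi(f) = min of <alpha,xi> over nonzero components (= +infinity for f = 0).\<close>
definition wt :: "(('n::finite \<Rightarrow> int) \<Rightarrow> 'a::comm_ring_1 \<Rightarrow> 'a) \<Rightarrow> ('n \<Rightarrow> real) \<Rightarrow> 'a \<Rightarrow> ereal" where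
  "wt pr \<xi> f = (INF \<alpha>\<in>{\<alpha>. pr \<alpha> f \<noteq> 0}. ereal (pair \<alpha> \<xi>))"

definition Fwt :: "(('n::finite \<Rightarrow> int) \<Rightarrow> 'a::comm_ring_1 \<Rightarrow> 'a) \<Rightarrow> ('n \<Rightarrow> real) \<Rightarrow> real \<Rightarrow> 'a set" where
  "Fwt pr \<xi> t = {f. wt pr \<xi> f \<ge> ereal t}"

definition lambda_max :: "(('n::finite \<Rightarrow> int) \<Rightarrow> 'a::comm_ring_1 \<Rightarrow> 'a) \<Rightarrow> ('n \<Rightarrow> real) \<Rightarrow> (real \<Rightarrow> 'a set) \<Rightarrow> ereal" where
  "lambda_max pr \<xi>0 F =
     (SUP t\<in>{t::real. t > 0 \<and> (\<exists>m::nat. \<not> F (t * real m) \<subseteq> Fwt pr \<xi>0 (real m))}. ereal t)"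

end

theory Submission
  imports Defs
begin

lemma grading_hom0:
  assumes "is_grading pr" "pr \<beta> h = h" "\<delta> \<noteq> \<beta>"
  shows "pr \<delta> h = 0"
proof -
  have "pr \<delta> (pr \<beta> h) = 0" using assms(1,3) unfolding is_grading_def by presburger
  thus ?thesis using assms(2) by simp
qed

lemma wt_hom:
  assumes "is_grading pr" "pr \<beta> h = h" "h \<noteq> 0"
  shows "wt pr \<xi> h = ereal (pair \<beta> \<xi>)"
proof -
  have "{\<delta>. pr \<delta> h \<noteq> 0} = {\<beta>}"
    using grading_hom0[OF assms(1,2)] assms(2,3) by auto
  thus ?thesis unfolding wt_def by simp
qed

lemma hom_pow:
  assumes "is_grading pr" "pr \<alpha> g = g"
  shows "pr (\<lambda>i. int k * \<alpha> i) (g ^ k) = g ^ k"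
proof (induction k)
  case 0
  have "(\<lambda>i. int 0 * \<alpha> i) = 0" by (rule ext) simp
  then show ?case using assms(1) unfolding is_grading_def by simp
next
  case (Suc k)
  have e: "(\<lambda>i. int (Suc k) * \<alpha> i) = \<alpha> + (\<lambda>i. int k * \<alpha> i)"
    by (rule ext) (simp add: algebra_simps)
  have "pr (\<alpha> + (\<lambda>i. int k * \<alpha> i)) (g * g ^ k) = g * g ^ k"
    using assms Suc unfolding is_grading_def by blast
  then show ?case using e by simp
qed

lemma pair_scale: "pair (\<lambda>i. int k * \<alpha> i) \<xi> = real k * pair \<alpha> \<xi>"
  unfolding pair_def by (simp add: sum_distrib_left algebra_simps)

lemma pair_smul: "pair \<alpha> (\<lambda>i. a * \<xi> i) = a * pair \<alpha> \<xi>"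
  unfolding pair_def by (simp add: sum_distrib_left algebra_simps)

lemma pow_in_F:
  assumes "filtration pr F" "s \<ge> 0" "g \<in> F s"
  shows "g ^ k \<in> F (real k * s)"
proof (induction k)
  case 0
  then show ?case using assms(1) unfolding filtration_def by simp
next
  case (Suc k)
  have "g * g ^ k \<in> F (s + real k * s)"
    using assms Suc unfolding filtration_def by (meson mult_nonneg_nonneg of_nat_0_le_iff)
  then show ?case by (simp add: algebra_simps)
qed

lemma hom_pos:
  assumes "good_cone pr \<xi>0" "pr \<alpha> g = g" "g \<noteq> 0" "pr 0 g = 0"
  shows "pair \<alpha> \<xi>0 > 0"
proof -
  have "\<alpha> \<noteq> 0" using assms by auto
  thus ?thesis using assms unfolding good_cone_def by blast
qed

lemma hom_nonneg:
  assumes "good_cone pr \<xi>0" "pr \<alpha> g = g" "g \<noteq> 0"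
  shows "pair \<alpha> \<xi>0 \<ge> 0"
proof (cases "\<alpha> = 0")
  case True then show ?thesis by (simp add: pair_def)
next
  case False then show ?thesis using assms unfolding good_cone_def
    by (meson less_imp_le)
qed

lemma wt_nonneg:
  assumes "good_cone pr \<xi>0"
  shows "wt pr \<xi>0 f \<ge> 0"
  unfolding wt_def
proof (rule INF_greatest)
  fix \<beta> assume "\<beta> \<in> {\<alpha>. pr \<alpha> f \<noteq> 0}"
  moreover have "is_grading pr" using assms good_cone_def by blast
  ultimately have "pr \<beta> (pr \<beta> f) = pr \<beta> f" "pr \<beta> f \<noteq> 0" unfolding is_grading_def by auto
  then show "0 \<le> ereal (pair \<beta> \<xi>0)" using hom_nonneg[OF assms] by simp
qed

lemma F_sub_max:
  assumes "filtration pr F" "s > 0" "g \<in> F s"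
  shows "pr 0 g = 0"
proof -
  have "m_primary pr (F s)" using assms unfolding filtration_def by blast
  hence "radical (F s) = max_ideal pr" unfolding m_primary_def by blast
  moreover have "g \<in> radical (F s)" unfolding radical_def using assms(3)
    by (metis (mono_tags) mem_Collect_eq power_one_right)
  ultimately show ?thesis unfolding max_ideal_def by blast
qed

lemma SF_nonempty:
  assumes gc: "good_cone pr \<xi>0" and fil: "filtration pr F"
    and h: "pr \<alpha> g = g" "g \<noteq> 0" "pr 0 g = 0"
  shows "\<exists>t>0. \<exists>m::nat. \<not> F (t * real m) \<subseteq> Fwt pr \<xi>0 (real m)"
proof -
  have gr: "is_grading pr" using gc good_cone_def by blast
  have "m_primary pr (F 1)" using fil zero_less_one unfolding filtration_def by blast
  hence "radical (F 1) = max_ideal pr" unfolding m_primary_def by blast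
  hence "g \<in> radical (F 1)" using h unfolding max_ideal_def by blast
  then obtain n where n: "g ^ n \<in> F 1" unfolding radical_def by blast
  define w where "w = real n * pair \<alpha> \<xi>0"
  define m where "m = nat \<lceil>w\<rceil> + 1"
  have wm: "w < real m" unfolding m_def by linarith
  have mpos: "real m > 0" unfolding m_def by simp
  have hw: "wt pr \<xi>0 (g ^ n) = ereal w"
    using wt_hom[OF gr hom_pow[OF gr h(1), of n]] h(2) pair_scale w_def by simp
  have "g ^ n \<notin> Fwt pr \<xi>0 (real m)" unfolding Fwt_def using hw wm by simp
  moreover have "F (1 / real m * real m) = F 1" using mpos by simp
  ultimately show ?thesis using n mpos
    by (metis divide_pos_pos subsetD zero_less_one)
qed

theorem lemma2p15:
  fixes pr :: "('n::finite \<Rightarrow> int) \<Rightarrow> 'a::idom \<Rightarrow> 'a"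
    and \<xi>0 :: "'n \<Rightarrow> real" and F :: "real \<Rightarrow> 'a set" and a :: real
  assumes "good_cone pr \<xi>0"
    and "filtration pr F" and "linearly_bounded pr F" and "T_invariant pr F"
    and "a > 0"
  shows "lambda_max pr \<xi>0 (twist pr F (\<lambda>i. a * \<xi>0 i)) = lambda_max pr \<xi>0 F + ereal a"
proof -
  note gc = assms(1) and fil = assms(2) and ti = assms(4) and apos = assms(5)
  have gr: "is_grading pr" using gc good_cone_def by blast
  define G where "G = twist pr F (\<lambda>i. a * \<xi>0 i)"
  define SF where "SF = {t::real. t > 0 \<and> (\<exists>m::nat. \<not> F (t * real m) \<subseteq> Fwt pr \<xi>0 (real m))}"
  define SG where "SG = {t::real. t > 0 \<and> (\<exists>m::nat. \<not> G (t * real m) \<subseteq> Fwt pr \<xi>0 (real m))}"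
  have F0: "0 \<in> F s" if "s \<ge> 0" for s
    using fil that unfolding filtration_def is_ideal_def by blast
  have Fext0: "0 \<in> Fext F s" for s using F0 unfolding Fext_def by auto
  have Fmono: "F s \<subseteq> F t" if "0 \<le> t" "t \<le> s" for s t
    using fil that unfolding filtration_def by blast
  have getcomp: "\<exists>\<beta>. pr \<beta> f \<noteq> 0 \<and> pair \<beta> \<xi>0 < real m \<and> pr \<beta> (pr \<beta> f) = pr \<beta> f"
    if "f \<notin> Fwt pr \<xi>0 (real m)" for f m
  proof -
    have "wt pr \<xi>0 f < ereal (real m)" using that unfolding Fwt_def by auto
    then obtain \<beta> where "pr \<beta> f \<noteq> 0" "ereal (pair \<beta> \<xi>0) < ereal (real m)"
      unfolding wt_def INF_less_iff by auto
    moreover have "pr \<beta> (pr \<beta> f) = pr \<beta> f" using gr unfolding is_grading_def by simp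
    ultimately show ?thesis by auto
  qed
  have A: "\<exists>t'\<in>SG. t + a \<le> t'" if tSF: "t \<in> SF" for t
  proof -
    obtain m :: nat and f where t0: "t > 0" and fF: "f \<in> F (t * real m)" and fw: "f \<notin> Fwt pr \<xi>0 (real m)"
      using tSF unfolding SF_def by blast
    obtain \<beta> where b: "pr \<beta> f \<noteq> 0" "pair \<beta> \<xi>0 < real m" "pr \<beta> (pr \<beta> f) = pr \<beta> f"
      using getcomp[OF fw] by blast
    define g where "g = pr \<beta> f"
    define w where "w = pair \<beta> \<xi>0"
    have w0: "w \<ge> 0" using hom_nonneg[OF gc b(3) b(1)] w_def by simp
    have mpos: "real m > 0" using w0 b(2) w_def by simp
    have tm: "t * real m > 0" using t0 mpos by simp
    have gF: "g \<in> F (t * real m)"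
    proof -
      have "F (t * real m) = {f. \<forall>\<alpha>. pr \<alpha> f \<in> F (t * real m)}"
        using ti tm unfolding T_invariant_def by simp
      thus ?thesis using fF unfolding g_def by blast
    qed
    have g0: "pr 0 g = 0" using F_sub_max[OF fil tm gF] .
    have wpos: "w > 0" unfolding w_def using hom_pos[OF gc b(3) b(1) g0[unfolded g_def]] .
    have mw: "real m - w > 0" using b(2) w_def by simp
    define k where "k = nat \<lceil>(t + a) / (t * (real m - w))\<rceil>"
    have "(t + a) / (t * (real m - w)) \<le> real k" unfolding k_def by linarith
    hence kbig: "t + a \<le> real k * t * (real m - w)"
      using t0 mw by (simp add: divide_le_eq mult.assoc mult.commute mult.left_commute)
    define h where "h = g ^ k"
    have hh: "pr (\<lambda>i. int k * \<beta> i) h = h" using hom_pow[OF gr b(3)] g_def h_def by simp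
    have hnz: "h \<noteq> 0" using b(1) g_def h_def by simp
    have hF: "h \<in> F (real k * (t * real m))" using pow_in_F[OF fil _ gF] tm h_def by simp
    define m' where "m' = nat \<lfloor>real k * w\<rfloor> + 1"
    have m'1: "real k * w < real m'" "real m' \<le> real k * w + 1" unfolding m'_def
      using wpos by (simp_all add: of_nat_nat) linarith+
    have m'pos: "real m' > 0" unfolding m'_def by simp
    define t' where "t' = (real k * t * real m + a * real k * w) / real m'"
    have t'm': "t' * real m' = real k * t * real m + a * real k * w"
      unfolding t'_def using m'pos by simp
    have "(t + a) * real m' \<le> (t + a) * (real k * w + 1)"
      using m'1(2) t0 apos by (intro mult_left_mono) auto
    also have "\<dots> \<le> t' * real m'" unfolding t'm' using kbig by (simp add: algebra_simps)
    finally have ta: "t + a \<le> t'" using m'pos by simp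
    have t'pos: "t' > 0" using ta t0 apos by simp
    have hG: "h \<in> G (t' * real m')"
      unfolding G_def twist_def
    proof (clarify)
      fix \<delta>
      show "pr \<delta> h \<in> Fext F (t' * real m' - pair \<delta> (\<lambda>i. a * \<xi>0 i))"
      proof (cases "\<delta> = (\<lambda>i. int k * \<beta> i)")
        case True
        have "t' * real m' - pair \<delta> (\<lambda>i. a * \<xi>0 i) = real k * (t * real m)"
          unfolding t'm' True pair_smul pair_scale w_def by (simp add: algebra_simps)
        then show ?thesis using True hh hF unfolding Fext_def by auto
      next
        case False
        then show ?thesis using grading_hom0[OF gr hh False] Fext0 by simp
      qed
    qed
    have "wt pr \<xi>0 h = ereal (real k * w)"
      using wt_hom[OF gr hh hnz] pair_scale w_def by simp
    hence "h \<notin> Fwt pr \<xi>0 (real m')" unfolding Fwt_def using m'1(1) by simp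
    hence "t' \<in> SG" unfolding SG_def using hG t'pos by blast
    thus ?thesis using ta by blast
  qed
  have B: "\<exists>t\<in>SF. t' \<le> t + a" if tSG: "t' \<in> SG" for t'
  proof -
    obtain m :: nat and f where t0: "t' > 0" and fG: "f \<in> G (t' * real m)" and fw: "f \<notin> Fwt pr \<xi>0 (real m)"
      using tSG unfolding SG_def by blast
    obtain \<beta> where b: "pr \<beta> f \<noteq> 0" "pair \<beta> \<xi>0 < real m" "pr \<beta> (pr \<beta> f) = pr \<beta> f"
      using getcomp[OF fw] by blast
    define g where "g = pr \<beta> f"
    define w where "w = pair \<beta> \<xi>0"
    have w0: "w \<ge> 0" using hom_nonneg[OF gc b(3) b(1)] w_def by simp
    have mpos: "real m > 0" using w0 b(2) w_def by simp
    have tm: "t' * real m > 0" using t0 mpos by simp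
    have gF: "g \<in> Fext F (t' * real m - a * w)"
      using fG unfolding G_def twist_def g_def w_def pair_smul by blast
    have g0: "pr 0 g = 0"
    proof (cases "\<beta> = 0")
      case True
      hence "w = 0" unfolding w_def pair_def by simp
      hence "g \<in> F (t' * real m)" using gF tm unfolding Fext_def by simp
      hence "pr 0 g = 0" using F_sub_max[OF fil tm] by blast
      thus ?thesis using True b(3) g_def b(1) by simp
    next
      case False
      thus ?thesis using grading_hom0[OF gr b(3)] g_def by simp
    qed
    obtain t0' where t0': "t0' \<in> SF"
      using SF_nonempty[OF gc fil b(3) b(1)] g0 g_def unfolding SF_def by blast
    show ?thesis
    proof (cases "t' \<le> a")
      case True
      have "t0' > 0" using t0' SF_def by simp
      then show ?thesis using True t0' by (intro bexI[of _ t0']) auto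
    next
      case False
      have "(t' - a) * real m < t' * real m - a * w"
        using b(2) w_def apos by (simp add: algebra_simps)
      moreover have "(t' - a) * real m > 0" using False mpos by simp
      ultimately have "g \<in> F ((t' - a) * real m)"
        using gF Fmono[of "(t' - a) * real m" "t' * real m - a * w"] unfolding Fext_def by auto
      moreover have "g \<notin> Fwt pr \<xi>0 (real m)"
        using wt_hom[OF gr b(3) b(1)] b(2) g_def unfolding Fwt_def by simp
      ultimately have "t' - a \<in> SF" unfolding SF_def using False by auto
      then show ?thesis by (intro bexI[of _ "t' - a"]) auto
    qed
  qed
  have eq: "(SUP t\<in>SG. ereal t) = (SUP t\<in>SF. ereal t + ereal a)"
  proof (rule antisym)
    show "(SUP t\<in>SG. ereal t) \<le> (SUP t\<in>SF. ereal t + ereal a)"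
    proof (rule SUP_least)
      fix t' assume "t' \<in> SG"
      then obtain t where "t \<in> SF" "t' \<le> t + a" using B by blast
      hence "ereal t' \<le> ereal t + ereal a" by simp
      also have "\<dots> \<le> (SUP t\<in>SF. ereal t + ereal a)" using \<open>t \<in> SF\<close> by (rule SUP_upper)
      finally show "ereal t' \<le> (SUP t\<in>SF. ereal t + ereal a)" .
    qed
  next
    show "(SUP t\<in>SF. ereal t + ereal a) \<le> (SUP t\<in>SG. ereal t)"
    proof (rule SUP_least)
      fix t assume "t \<in> SF"
      then obtain t' where "t' \<in> SG" "t + a \<le> t'" using A by blast
      hence "ereal t + ereal a \<le> ereal t'" by simp
      also have "\<dots> \<le> (SUP t\<in>SG. ereal t)" using \<open>t' \<in> SG\<close> by (rule SUP_upper)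
      finally show "ereal t + ereal a \<le> (SUP t\<in>SG. ereal t)" .
    qed
  qed
  have lhs: "lambda_max pr \<xi>0 (twist pr F (\<lambda>i. a * \<xi>0 i)) = (SUP t\<in>SG. ereal t)"
    unfolding lambda_max_def SG_def G_def ..
  have rhs: "lambda_max pr \<xi>0 F = (SUP t\<in>SF. ereal t)"
    unfolding lambda_max_def SF_def ..
  show ?thesis
  proof (cases "SF = {}")
    case True
    then show ?thesis unfolding lhs rhs eq by (simp add: bot_ereal_def)
  next
    case False
    then show ?thesis unfolding lhs rhs eq by (rule SUP_ereal_add_left) simp
  qed
qed

end
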